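(* Let $x_1,\dots,x_T\in\mathbb{R}^d$ and $r>0$. Let $A_0=I$, $A_t=A_{t-1}+\frac1rx_tx_t^\top$ for $t\ge1$, and let $D_t$ be the diagonal matrix with the same diagonal as $A_t$. Then $$\sum_{t=1}^Tx_t^\top D_t^{-1}x_t\le r\sum_{i=1}^d\ln\left(\frac1r\sum_{t=1}^Tx_{t,i}^2+1\right).$$ *)

theory Defs
  imports "HOL-Analysis.Analysis"
begin

definition outer :: "real^'d \<Rightarrow> real^'d \<Rightarrow> real^'d^'d" where
  "outer u v = (\<chi> i j. u $ i * v $ j)"

text \<open>A_0 = I, A_t = A_{t-1} + (1/r) x_t x_t^T (vectors indexed from 1; x 0 is unused).\<close>
fun Amat :: "real \<Rightarrow> (nat \<Rightarrow> real^'d) \<Rightarrow> nat \<Rightarrow> real^'d^'d" where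
  "Amat r x 0 = mat 1"
| "Amat r x (Suc t) = Amat r x t + (1 / r) *\<^sub>R outer (x (Suc t)) (x (Suc t))"

definition diag_of :: "real^'d^'d \<Rightarrow> real^'d^'d" where
  "diag_of M = (\<chi> i j. if i = j then M $ i $ i else 0)"

definition Dmat :: "real \<Rightarrow> (nat \<Rightarrow> real^'d) \<Rightarrow> nat \<Rightarrow> real^'d^'d" where
  "Dmat r x t = diag_of (Amat r x t)"

end

theory Submission
  imports Defs
begin

lemma Amat_diag:
  "Amat r x t $ i $ i = 1 + (1/r) * (\<Sum>s=1..t. (x s $ i)^2)"
  by (induction t) (auto simp: outer_def mat_def power2_eq_square algebra_simps)

lemma inv_unique_mat:
  fixes D E :: "real^'d^'d"
  assumes "D ** E = mat 1" "E ** D = mat 1"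
  shows "matrix_inv D = E"
proof -
  have ex: "\<exists>M. D ** M = mat 1 \<and> M ** D = mat 1" using assms by blast
  define M where "M = matrix_inv D"
  have M: "D ** M = mat 1 \<and> M ** D = mat 1"
    unfolding M_def matrix_inv_def by (rule someI_ex[OF ex])
  have "M = M ** (D ** E)" using assms by simp
  also have "\<dots> = (M ** D) ** E" by (simp add: matrix_mul_assoc)
  also have "\<dots> = E" using M by simp
  finally show ?thesis unfolding M_def by simp
qed

lemma diag_inv:
  fixes a :: "'d::finite \<Rightarrow> real"
  assumes "\<And>i. a i \<noteq> 0"
  shows "matrix_inv (\<chi> i j. if i = j then a i else 0) = (\<chi> i j. if i = j then 1 / a i else 0)"
  by (rule inv_unique_mat)
     (auto simp: matrix_matrix_mult_def mat_def vec_eq_iff assms if_distrib[of "\<lambda>z. z * _"] cong: if_cong)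

lemma diag_quad:
  fixes a :: "'d::finite \<Rightarrow> real" and v :: "real^'d"
  shows "v \<bullet> ((\<chi> i j. if i = j then 1 / a i else 0) *v v) = (\<Sum>i\<in>UNIV. (v $ i)^2 / a i)"
  by (simp add: inner_vec_def matrix_vector_mult_def if_distrib[of "\<lambda>z. z * _"] power2_eq_square
       cong: if_cong)

lemma scalar_telescope:
  fixes y :: "nat \<Rightarrow> real" and r :: real
  assumes "r > 0" and y: "\<And>t. y t \<ge> 0"
  shows "(\<Sum>t=1..T. y t / (1 + (1/r) * (\<Sum>s=1..t. y s))) \<le> r * ln (1 + (1/r) * (\<Sum>t=1..T. y t))"
proof (induction T)
  case 0 then show ?case by simp
next
  case (Suc T)
  define a where "a = 1 + (1/r) * (\<Sum>s=1..T. y s)"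
  define b where "b = 1 + (1/r) * (\<Sum>s=1..Suc T. y s)"
  have S: "(\<Sum>s=1..Suc T. y s) = (\<Sum>s=1..T. y s) + y (Suc T)" by simp
  have sa: "(\<Sum>s=1..T. y s) \<ge> 0" using y by (simp add: sum_nonneg)
  have a1: "a \<ge> 1" unfolding a_def using sa assms by simp
  have ba: "b = a + y (Suc T) / r" unfolding a_def b_def S by (simp add: add_divide_distrib)
  have b1: "b \<ge> a" using ba y[of "Suc T"] assms by simp
  have key: "y (Suc T) / b \<le> r * (ln b - ln a)"
  proof -
    have "ln (a / b) \<le> a / b - 1" using a1 b1 by (intro ln_le_minus_one) auto
    then have "1 - a / b \<le> ln b - ln a" using a1 b1 by (simp add: ln_divide_pos)
    moreover have "y (Suc T) / b = r * (1 - a / b)" using ba a1 b1 assms by (simp add: field_simps)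
    ultimately show ?thesis using assms by (simp add: mult_left_mono)
  qed
  have "(\<Sum>t=1..Suc T. y t / (1 + (1/r) * (\<Sum>s=1..t. y s)))
     = (\<Sum>t=1..T. y t / (1 + (1/r) * (\<Sum>s=1..t. y s))) + y (Suc T) / b"
    unfolding b_def by simp
  also have "\<dots> \<le> r * ln a + r * (ln b - ln a)" using Suc key unfolding a_def by linarith
  also have "\<dots> = r * ln b" by (simp add: algebra_simps)
  finally show ?case unfolding b_def .
qed

theorem lemma4:
  fixes x :: "nat \<Rightarrow> real^'d" and r :: real and T :: nat
  assumes "r > 0"
  shows "(\<Sum>t=1..T. x t \<bullet> (matrix_inv (Dmat r x t) *v x t))
           \<le> r * (\<Sum>i\<in>(UNIV::'d set). ln ((1 / r) * (\<Sum>t=1..T. (x t $ i)^2) + 1))"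
proof -
  define a where "a t i = 1 + (1/r) * (\<Sum>s=1..t. (x s $ i)^2)" for t i
  have apos: "a t i > 0" for t i
  proof -
    have "(\<Sum>s=1..t. (x s $ i)^2) \<ge> 0" by (simp add: sum_nonneg)
    then show ?thesis unfolding a_def using assms by (simp add: add_pos_nonneg)
  qed
  have D: "Dmat r x t = (\<chi> i j. if i = j then a t i else 0)" for t
    unfolding Dmat_def diag_of_def a_def Amat_diag ..
  have "(\<Sum>t=1..T. x t \<bullet> (matrix_inv (Dmat r x t) *v x t))
      = (\<Sum>t=1..T. \<Sum>i\<in>UNIV. (x t $ i)^2 / a t i)"
    using apos by (simp add: D diag_inv diag_quad less_imp_neq[symmetric])
  also have "\<dots> = (\<Sum>i\<in>UNIV. \<Sum>t=1..T. (x t $ i)^2 / a t i)" by (rule sum.swap)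
  also have "\<dots> \<le> (\<Sum>i\<in>(UNIV::'d set). r * ln ((1 / r) * (\<Sum>t=1..T. (x t $ i)^2) + 1))"
    apply (rule sum_mono)
    using scalar_telescope[OF assms, where y= "\<lambda>t. (x t $ _)^2"] unfolding a_def by (simp add: add.commute)
  also have "\<dots> = r * (\<Sum>i\<in>(UNIV::'d set). ln ((1 / r) * (\<Sum>t=1..T. (x t $ i)^2) + 1))"
    by (simp add: sum_distrib_left)
  finally show ?thesis .
qed

end
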